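(* Let $d\geq 2$ and $m\geq 1$ be integers. Let $\{e^d_k\}$ and $\{e^{d+m}_k\}$ be the standard bases of $\mathbb{C}^d$ and $\mathbb{C}^{d+m}$, and let $|J\rangle=\sum_{k=1}^d e^d_k\in\mathbb{C}^d$ be the all-ones vector. Define $d\times(d+m)$ matrices $$V_i=\sum_{k=1}^{d}|e^d_k\rangle\langle e^{d+m}_{\mathrm{mod}(k+i-2,\,d+1)+1}|\quad (i=1,\dots,d+1),\qquad V_i=|J\rangle\langle e^{d+m}_i|\quad (i=d+2,\dots,d+m),$$ where $\mathrm{mod}(a,n)\in\{0,\dots,n-1\}$ is the remainder of $a$ modulo $n$, and define the completely positive map $\Phi:M_d\to M_{d+m}$ by $$\Phi(X)=\frac{1}{d(d+m)}\sum_{i=1}^{d+m}V_i^\dagger XV_i .$$ Then $\Phi$ is entanglement breaking.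
   Context: $M_n$ denotes the complex $n\times n$ matrices. A completely positive map $\Phi:M_{d_1}\to M_{d_2}$ is entanglement breaking if $(\mathrm{id}_{M_n}\otimes\Phi)(\rho)$ is separable for every $n$ and every state $\rho$ on $\mathbb{C}^n\otimes\mathbb{C}^{d_1}$; equivalently, its Choi matrix $\sum_{r,s=1}^{d_1}E_{rs}\otimes\Phi(E_{rs})$ is separable. *)

theory Defs
  imports "Jordan_Normal_Form.Matrix" "HOL-Library.Complex_Order"
begin

text \<open>Matrices are complex matrices of type complex mat (Jordan_Normal_Form);
  indices are 0-based.\<close>

definition adj :: "complex mat \<Rightarrow> complex mat" where
  "adj A = mat (dim_col A) (dim_row A) (\<lambda>(i,j). cnj (A $$ (j,i)))"

text \<open>Positive semidefinite n x n matrix: square, and the quadratic form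
  v^* A v is a nonnegative real for every v in C^n (complex order).\<close>
definition psd :: "nat \<Rightarrow> complex mat \<Rightarrow> bool" where
  "psd n A \<longleftrightarrow> A \<in> carrier_mat n n \<and>
     (\<forall>v. dim_vec v = n \<longrightarrow> 0 \<le> (\<Sum>i<n. \<Sum>j<n. cnj (v $ i) * A $$ (i,j) * v $ j))"

definition kron :: "complex mat \<Rightarrow> complex mat \<Rightarrow> complex mat" where
  "kron A B = mat (dim_row A * dim_row B) (dim_col A * dim_col B)
     (\<lambda>(i,j). A $$ (i div dim_row B, j div dim_col B) * B $$ (i mod dim_row B, j mod dim_col B))"

definition msum :: "nat \<Rightarrow> nat \<Rightarrow> ('i \<Rightarrow> complex mat) \<Rightarrow> 'i set \<Rightarrow> complex mat" where
  "msum nr nc f S = mat nr nc (\<lambda>ij. \<Sum>x\<in>S. f x $$ ij)"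

definition separable_op :: "nat \<Rightarrow> nat \<Rightarrow> complex mat \<Rightarrow> bool" where
  "separable_op n1 n2 \<rho> \<longleftrightarrow> (\<exists>(N::nat) A B. (\<forall>k<N. psd n1 (A k) \<and> psd n2 (B k)) \<and>
      \<rho> = msum (n1*n2) (n1*n2) (\<lambda>k. kron (A k) (B k)) {..<N})"

definition matunit :: "nat \<Rightarrow> nat \<Rightarrow> nat \<Rightarrow> complex mat" where
  "matunit n r s = mat n n (\<lambda>(i,j). if i = r \<and> j = s then 1 else 0)"

definition choi :: "nat \<Rightarrow> nat \<Rightarrow> (complex mat \<Rightarrow> complex mat) \<Rightarrow> complex mat" where
  "choi d1 d2 \<Phi> = msum (d1*d2) (d1*d2) (\<lambda>(r,s). kron (matunit d1 r s) (\<Phi> (matunit d1 r s)))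
      ({..<d1} \<times> {..<d1})"

definition entanglement_breaking :: "nat \<Rightarrow> nat \<Rightarrow> (complex mat \<Rightarrow> complex mat) \<Rightarrow> bool" where
  "entanglement_breaking d1 d2 \<Phi> \<longleftrightarrow> separable_op d1 d2 (choi d1 d2 \<Phi>)"

definition ket_bra :: "complex vec \<Rightarrow> complex vec \<Rightarrow> complex mat" where
  "ket_bra u v = mat (dim_vec u) (dim_vec v) (\<lambda>(a,b). u $ a * cnj (v $ b))"

definition ones_vec :: "nat \<Rightarrow> complex vec" where
  "ones_vec d = vec d (\<lambda>_. 1)"

text \<open>V_i with 0-based index i = 0..d+m-1 (paper's i+1). For paper index i \<le> d+1 and
  paper row index k, the column is mod(k+i-2,d+1)+1 (1-based), i.e. (k'+i') mod (d+1)
  0-based.\<close>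
definition Vop :: "nat \<Rightarrow> nat \<Rightarrow> nat \<Rightarrow> complex mat" where
  "Vop d m i = (if i \<le> d then
       msum d (d+m) (\<lambda>k. ket_bra (unit_vec d k) (unit_vec (d+m) ((k+i) mod (d+1)))) {..<d}
     else ket_bra (ones_vec d) (unit_vec (d+m) i))"

definition Phi :: "nat \<Rightarrow> nat \<Rightarrow> complex mat \<Rightarrow> complex mat" where
  "Phi d m X = (1 / (of_nat d * of_nat (d+m))) \<cdot>\<^sub>m
     msum (d+m) (d+m) (\<lambda>i. adj (Vop d m i) * X * Vop d m i) {..<d+m}"

end

theory Submission imports Defs begin

lemma cis_eq_1_int: "cis t = 1 \<longleftrightarrow> (\<exists>i::int. t = of_int i * 2 * pi)"
proof
  assume "cis t = 1"
  then have "cos t = 1" by (simp add: complex_eq_iff)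
  then show "\<exists>i::int. t = of_int i * 2 * pi" by (simp add: cos_one_2pi_int)
next
  assume "\<exists>i::int. t = of_int i * 2 * pi"
  then obtain i::int where "t = of_int i * 2 * pi" by blast
  then have "t = 2 * pi * of_int i" by simp
  then show "cis t = 1" by simp
qed

lemma fourier:
  fixes n x y :: nat
  assumes n: "n > 0"
  shows "(\<Sum>k<n. cis (2*pi/n) ^ (k*x) * cnj (cis (2*pi/n) ^ (k*y))) =
     (if x mod n = y mod n then of_nat n else 0)"
proof -
  define z where "z = cis (2*pi*(real x - real y)/n)"
  have eq: "cis (2*pi/n) ^ (k*x) * cnj (cis (2*pi/n) ^ (k*y)) = z ^ k" for k
    unfolding z_def DeMoivre cis_cnj cis_mult
    by (rule arg_cong[where f=cis]) (simp add: field_simps diff_divide_distrib)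
  have z1: "z = 1 \<longleftrightarrow> x mod n = y mod n"
  proof
    assume "z = 1"
    then obtain i::int where i: "2*pi*(real x - real y)/n = of_int i * 2 * pi"
      unfolding z_def cis_eq_1_int by blast
    have "real x - real y = (2*pi*(real x - real y)/n) * n / (2*pi)" using n by simp
    also have "\<dots> = of_int i * n" unfolding i by simp
    finally have "real x - real y = of_int i * n" .
    then have "real_of_int (int x - int y) = real_of_int (i * int n)" by simp
    then have "int x - int y = i * int n" by (simp only: of_int_eq_iff)
    then have "int x mod int n = int y mod int n" by (simp add: mod_eq_dvd_iff)
    then have "int (x mod n) = int (y mod n)" by (simp only: of_nat_mod)
    then show "x mod n = y mod n" by simp
  next
    assume "x mod n = y mod n"
    then have "int (x mod n) = int (y mod n)" by simp
    then have "int x mod int n = int y mod int n" by (simp only: of_nat_mod)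
    then have "int n dvd (int x - int y)" by (simp add: mod_eq_dvd_iff)
    then obtain i where "int x - int y = int n * i" by (elim dvdE)
    then have "real_of_int (int x - int y) = real_of_int (int n * i)" by simp
    then have "real x - real y = real n * of_int i" by simp
    then have "2*pi*(real x - real y)/n = 2 * pi * of_int i" using n by (simp add: field_simps)
    then show "z = 1" unfolding z_def by simp
  qed
  have zn: "z ^ n = 1"
  proof -
    define i::int where "i = int x - int y"
    then have "real x - real y = of_int i" by simp
    then have "real n * (2*pi*(real x - real y)/n) = 2*pi*of_int i" using n by simp
    then show ?thesis unfolding z_def DeMoivre by simp
  qed
  show ?thesis
  proof (cases "x mod n = y mod n")
    case True
    then show ?thesis using z1 eq by simp
  next
    case False
    then have "z \<noteq> 1" using z1 by simp
    then show ?thesis using False eq geometric_sum[of z n] zn by simp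
  qed
qed

lemma psd_ket:
  assumes "0 \<le> c"
  shows "psd (dim_vec u) (complex_of_real c \<cdot>\<^sub>m ket_bra u u)"
proof -
  have "0 \<le> (\<Sum>i<dim_vec u. \<Sum>j<dim_vec u. cnj (v $ i) * (complex_of_real c \<cdot>\<^sub>m ket_bra u u) $$ (i,j) * v $ j)"
    if "dim_vec v = dim_vec u" for v
  proof -
    define S where "S = (\<Sum>i<dim_vec u. cnj (v $ i) * u $ i)"
    have cS: "cnj S = (\<Sum>j<dim_vec u. v $ j * cnj (u $ j))" unfolding S_def by simp
    have "(\<Sum>i<dim_vec u. \<Sum>j<dim_vec u. cnj (v $ i) * (complex_of_real c \<cdot>\<^sub>m ket_bra u u) $$ (i,j) * v $ j)
       = (\<Sum>i<dim_vec u. \<Sum>j<dim_vec u. complex_of_real c * ((cnj (v $ i) * u $ i) * (v $ j * cnj (u $ j))))"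
      by (intro sum.cong refl) (simp add: ket_bra_def mult_ac)
    also have "\<dots> = complex_of_real c * (S * cnj S)"
      unfolding cS unfolding S_def sum_product by (simp only: sum_distrib_left)
    also have "\<dots> = complex_of_real (c * ((Re S)\<^sup>2 + (Im S)\<^sup>2))"
      by (simp add: complex_mult_cnj)
    also have "0 \<le> \<dots>" using assms by (simp add: less_eq_complex_def)
    finally show ?thesis .
  qed
  then show ?thesis unfolding psd_def by (simp add: ket_bra_def)
qed

lemma adjEV:
  assumes "V \<in> carrier_mat d N" "r < d" "s < d" "a < N" "b < N"
  shows "(adj V * matunit d r s * V) $$ (a,b) = cnj (V $$ (r,a)) * V $$ (s,b)"
proof -
  let ?M = "adj V * matunit d r s"
  have c1: "adj V \<in> carrier_mat N d" using assms by (simp add: adj_def)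
  have c2: "matunit d r s \<in> carrier_mat d d" by (simp add: matunit_def)
  have M: "?M \<in> carrier_mat N d" using mult_carrier_mat[OF c1 c2] .
  have Me: "?M $$ (a', l) = (if l = s then cnj (V $$ (r,a')) else 0)" if "a' < N" "l < d" for a' l
  proof -
    have "?M $$ (a', l) = (\<Sum>k\<in>{0..<d}. cnj (V $$ (k,a')) * (if k = r \<and> l = s then 1 else 0))"
      using assms that by (simp add: index_mult_mat scalar_prod_def adj_def matunit_def)
    also have "\<dots> = (\<Sum>k\<in>{0..<d}. if k = r then (if l = s then cnj (V $$ (k,a')) else 0) else 0)"
      by (intro sum.cong refl) auto
    also have "\<dots> = (if l = s then cnj (V $$ (r,a')) else 0)" using assms by simp
    finally show ?thesis .
  qed
  have "(?M * V) $$ (a,b) = row ?M a \<bullet> col V b" using assms M by (intro index_mult_mat(1)) auto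
  also have "\<dots> = (\<Sum>l\<in>{0..<d}. ?M $$ (a,l) * V $$ (l,b))"
    using assms M by (simp add: scalar_prod_def del: index_mult_mat)
  also have "\<dots> = (\<Sum>l\<in>{0..<d}. if l = s then cnj (V $$ (r,a)) * V $$ (l,b) else 0)"
    using assms by (intro sum.cong refl) (simp add: Me)
  also have "\<dots> = cnj (V $$ (r,a)) * V $$ (s,b)" using assms by simp
  finally show ?thesis .
qed


lemma Vop_carrier: "Vop d m i \<in> carrier_mat d (d+m)"
  by (simp add: Vop_def msum_def ket_bra_def ones_vec_def)

lemma Vop_entry:
  assumes "k < d" "c < d+m"
  shows "Vop d m i $$ (k,c) = (if i \<le> d then (if c = (k+i) mod (d+1) then 1 else 0)
                               else (if c = i then 1 else 0))"
proof (cases "i \<le> d")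
  case True
  have "Vop d m i $$ (k,c) = (\<Sum>k'<d. (if k = k' then 1 else 0) *
          cnj (if c = (k'+i) mod (d+1) then 1 else 0))"
    using True assms by (simp add: Vop_def msum_def ket_bra_def unit_vec_def)
  also have "\<dots> = (\<Sum>k'<d. if k' = k then (if c = (k+i) mod (d+1) then 1 else 0) else 0)"
    by (intro sum.cong refl) auto
  also have "\<dots> = (if c = (k+i) mod (d+1) then 1 else 0)" using assms by simp
  finally show ?thesis using True by simp
next
  case False
  then show ?thesis using assms by (simp add: Vop_def ket_bra_def ones_vec_def unit_vec_def)
qed

lemma kron_entry:
  assumes "p < dim_row A * dim_row B" "q < dim_col A * dim_col B"
  shows "kron A B $$ (p,q) = A $$ (p div dim_row B, q div dim_col B) * B $$ (p mod dim_row B, q mod dim_col B)"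
  using assms by (simp add: kron_def)

lemma choi_entry:
  assumes "\<And>X. \<Phi> X \<in> carrier_mat n2 n2" "p < n1*n2" "q < n1*n2"
  shows "choi n1 n2 \<Phi> $$ (p,q) = \<Phi> (matunit n1 (p div n2) (q div n2)) $$ (p mod n2, q mod n2)"
proof -
  have pd: "p div n2 < n1" "q div n2 < n1" using assms
    by (metis less_mult_imp_div_less mult.commute)+
  let ?F = "\<lambda>rs. \<Phi> (matunit n1 (fst rs) (snd rs)) $$ (p mod n2, q mod n2)"
  have "choi n1 n2 \<Phi> $$ (p,q) = (\<Sum>rs\<in>{..<n1} \<times> {..<n1}.
      (case rs of (r,s) \<Rightarrow> kron (matunit n1 r s) (\<Phi> (matunit n1 r s))) $$ (p,q))"
    using assms by (simp add: choi_def msum_def)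
  also have "\<dots> = (\<Sum>rs\<in>{..<n1} \<times> {..<n1}. if rs = (p div n2, q div n2) then ?F rs else 0)"
  proof (intro sum.cong refl)
    fix rs assume "rs \<in> {..<n1} \<times> {..<n1}"
    obtain r s where rs: "rs = (r,s)" by (cases rs)
    have d: "dim_row (\<Phi> X) = n2" "dim_col (\<Phi> X) = n2" for X using assms(1)[of X] by auto
    show "(case rs of (r,s) \<Rightarrow> kron (matunit n1 r s) (\<Phi> (matunit n1 r s))) $$ (p,q) =
       (if rs = (p div n2, q div n2) then ?F rs else 0)"
      using assms pd unfolding rs by (simp add: kron_entry d matunit_def)
  qed
  also have "\<dots> = ?F (p div n2, q div n2)" using pd by simp
  finally show ?thesis by simp
qed

lemma Phi_carrier: "Phi d m X \<in> carrier_mat (d+m) (d+m)"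
  by (simp add: Phi_def msum_def)

lemma Phi_entry:
  assumes "r < d" "s < d" "a < d+m" "b < d+m"
  shows "Phi d m (matunit d r s) $$ (a,b) = 1 / (of_nat d * of_nat (d+m)) *
     (\<Sum>i<d+m. if i \<le> d then (if a = (r+i) mod (d+1) \<and> b = (s+i) mod (d+1) then 1 else 0)
                else (if a = i \<and> b = i then 1 else 0))"
proof -
  have "Phi d m (matunit d r s) $$ (a,b) = 1 / (of_nat d * of_nat (d+m)) *
     (\<Sum>i<d+m. (adj (Vop d m i) * matunit d r s * Vop d m i) $$ (a,b))"
    using assms by (simp add: Phi_def msum_def)
  also have "(\<Sum>i<d+m. (adj (Vop d m i) * matunit d r s * Vop d m i) $$ (a,b)) =
     (\<Sum>i<d+m. if i \<le> d then (if a = (r+i) mod (d+1) \<and> b = (s+i) mod (d+1) then 1 else 0)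
                else (if a = i \<and> b = i then 1 else 0))"
    using assms by (intro sum.cong refl) (simp add: adjEV[OF Vop_carrier] Vop_entry)
  finally show ?thesis .
qed

lemma mod2: "(x::nat) < 2*n \<Longrightarrow> x mod n = (if x < n then x else x - n)"
  by (cases "x < n") (auto simp: le_mod_geq)

lemma count:
  fixes n r s a b :: nat
  assumes "r < n" "s < n"
  shows "(\<Sum>i<n. if a = (r+i) mod n \<and> b = (s+i) mod n then 1 else (0::complex)) =
     (if a < n \<and> b < n \<and> (a+s) mod n = (b+r) mod n then 1 else 0)"
proof (cases "a < n \<and> b < n")
  case False
  have "(if a = (r+i) mod n \<and> b = (s+i) mod n then 1 else (0::complex)) = 0" if "i < n" for i
    using False assms that by auto
  then have "(\<Sum>i<n. if a = (r+i) mod n \<and> b = (s+i) mod n then 1 else (0::complex)) = 0" by simp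
  then show ?thesis using False by auto
next
  case True
  define i0 where "i0 = (a+n-r) mod n"
  have i0: "i0 < n" using assms unfolding i0_def by simp
  have key: "(a = (r+i) mod n \<and> b = (s+i) mod n) \<longleftrightarrow> (i = i0 \<and> (a+s) mod n = (b+r) mod n)"
    if "i < n" for i
  proof -
    have e1: "(r+i) mod n = (if r+i < n then r+i else r+i-n)" using that assms by (intro mod2) auto
    have e2: "(s+i) mod n = (if s+i < n then s+i else s+i-n)" using that assms by (intro mod2) auto
    have e3: "i0 = (if a+n-r < n then a+n-r else a+n-r-n)" unfolding i0_def using True assms by (intro mod2) auto
    have e4: "(a+s) mod n = (if a+s < n then a+s else a+s-n)" using True assms by (intro mod2) auto
    have e5: "(b+r) mod n = (if b+r < n then b+r else b+r-n)" using True assms by (intro mod2) auto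
    show ?thesis unfolding e1 e2 e3 e4 e5 using True assms that by auto
  qed
  have "(\<Sum>i<n. if a = (r+i) mod n \<and> b = (s+i) mod n then 1 else (0::complex)) =
        (\<Sum>i<n. if i = i0 then (if (a+s) mod n = (b+r) mod n then 1 else 0) else 0)"
    by (intro sum.cong refl) (simp add: key)
  also have "\<dots> = (if (a+s) mod n = (b+r) mod n then 1 else 0)" using i0 by simp
  finally show ?thesis using True by simp
qed

theorem mainTheorem3:
  fixes d m :: nat
  assumes "d \<ge> 2" and "m \<ge> 1"
  shows "entanglement_breaking d (d+m) (Phi d m)"
proof -
  define n where "n = d+1"
  define N where "N = d+m"
  define w where "w = cis (2*pi/n)"
  define fv where "fv k = (if k \<le> d then vec d (\<lambda>r. cnj (w^(k*r))) else ones_vec d)" for k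
  define gv where "gv k = (if k \<le> d then vec N (\<lambda>a. if a \<le> d then w^(k*a) else 0) else unit_vec N k)" for k
  define cc where "cc k = (if k \<le> d then 1/(real d * real N * real n) else 1/(real d * real N))" for k
  define A where "A k = complex_of_real (cc k) \<cdot>\<^sub>m ket_bra (fv k) (fv k)" for k
  define B where "B k = ket_bra (gv k) (gv k)" for k
  have dfv: "dim_vec (fv k) = d" for k by (simp add: fv_def ones_vec_def)
  have dgv: "dim_vec (gv k) = N" for k by (simp add: gv_def)
  have psdA: "psd d (A k)" for k
    using psd_ket[of "cc k" "fv k"] unfolding A_def dfv by (simp add: cc_def)
  have psdB: "psd N (B k)" for k
  proof -
    have "complex_of_real 1 \<cdot>\<^sub>m ket_bra (gv k) (gv k) = B k"
      unfolding B_def by (rule eq_matI) (auto simp: ket_bra_def)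
    then show ?thesis using psd_ket[of 1 "gv k"] unfolding dgv by simp
  qed
  have eq: "choi d N (Phi d m) = msum (d*N) (d*N) (\<lambda>k. kron (A k) (B k)) {..<N}"
  proof (rule eq_matI)
    show "dim_row (choi d N (Phi d m)) = dim_row (msum (d*N) (d*N) (\<lambda>k. kron (A k) (B k)) {..<N})"
      by (simp add: choi_def msum_def)
    show "dim_col (choi d N (Phi d m)) = dim_col (msum (d*N) (d*N) (\<lambda>k. kron (A k) (B k)) {..<N})"
      by (simp add: choi_def msum_def)
    fix p q assume "p < dim_row (msum (d*N) (d*N) (\<lambda>k. kron (A k) (B k)) {..<N})"
      "q < dim_col (msum (d*N) (d*N) (\<lambda>k. kron (A k) (B k)) {..<N})"
    then have pq: "p < d*N" "q < d*N" by (simp_all add: msum_def)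
    define r where "r = p div N"
    define s where "s = q div N"
    define a where "a = p mod N"
    define b where "b = q mod N"
    have Npos: "N > 0" using pq by (cases N) auto
    have rs: "r < d" "s < d" unfolding r_def s_def using pq
      by (metis less_mult_imp_div_less mult.commute)+
    have ab: "a < N" "b < N" unfolding a_def b_def using Npos by simp_all
    have L: "choi d N (Phi d m) $$ (p,q) = Phi d m (matunit d r s) $$ (a,b)"
      unfolding r_def s_def a_def b_def N_def
      by (rule choi_entry) (use Phi_carrier pq N_def in auto)
    have R: "msum (d*N) (d*N) (\<lambda>k. kron (A k) (B k)) {..<N} $$ (p,q) =
       (\<Sum>k<N. complex_of_real (cc k) * (fv k $ r * cnj (fv k $ s)) * (gv k $ a * cnj (gv k $ b)))"
    proof -
      have "msum (d*N) (d*N) (\<lambda>k. kron (A k) (B k)) {..<N} $$ (p,q) = (\<Sum>k<N. kron (A k) (B k) $$ (p,q))"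
        using pq by (simp add: msum_def)
      also have "\<dots> = (\<Sum>k<N. complex_of_real (cc k) * (fv k $ r * cnj (fv k $ s)) * (gv k $ a * cnj (gv k $ b)))"
      proof (intro sum.cong refl)
        fix k
        have dA: "dim_row (A k) = d" "dim_col (A k) = d" by (simp_all add: A_def ket_bra_def dfv)
        have dB: "dim_row (B k) = N" "dim_col (B k) = N" by (simp_all add: B_def ket_bra_def dgv)
        show "kron (A k) (B k) $$ (p,q) = complex_of_real (cc k) * (fv k $ r * cnj (fv k $ s)) * (gv k $ a * cnj (gv k $ b))"
          using pq rs ab by (simp add: kron_entry dA dB r_def s_def a_def b_def A_def B_def ket_bra_def dfv dgv)
      qed
      finally show ?thesis .
    qed
    define phi where "phi i = (if i \<le> d then (if a = (r+i) mod (d+1) \<and> b = (s+i) mod (d+1) then 1 else 0)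
                else (if a = i \<and> b = i then 1 else (0::complex)))" for i
    define T where "T k = complex_of_real (cc k) * (fv k $ r * cnj (fv k $ s)) * (gv k $ a * cnj (gv k $ b))" for k
    have L2: "Phi d m (matunit d r s) $$ (a,b) = 1 / (of_nat d * of_nat N) * (\<Sum>i<N. phi i)"
      unfolding phi_def N_def using rs ab N_def by (intro Phi_entry) auto
    have split: "(\<Sum>i<N. f i) = (\<Sum>i<n. f i) + (\<Sum>i\<in>{n..<N}. f i)" for f :: "nat \<Rightarrow> complex"
    proof -
      have e: "{..<N} = {..<n} \<union> {n..<N}" using assms unfolding n_def N_def by auto
      have "sum f ({..<n} \<union> {n..<N}) = sum f {..<n} + sum f {n..<N}" by (rule sum.union_disjoint) auto
      then show ?thesis unfolding e[symmetric] .
    qed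
    have rn: "r < n" "s < n" using rs n_def by auto
    have c1: "(\<Sum>i<n. phi i) = (if a < n \<and> b < n \<and> (a+s) mod n = (b+r) mod n then 1 else 0)"
    proof -
      have "(\<Sum>i<n. phi i) = (\<Sum>i<n. if a = (r+i) mod n \<and> b = (s+i) mod n then 1 else (0::complex))"
        by (intro sum.cong refl) (simp add: phi_def n_def)
      also have "\<dots> = (if a < n \<and> b < n \<and> (a+s) mod n = (b+r) mod n then 1 else 0)"
        using count[OF rn] .
      finally show ?thesis .
    qed
    have c2: "(\<Sum>k<n. T k) = (if a < n \<and> b < n \<and> (a+s) mod n = (b+r) mod n
        then complex_of_real (1/(real d * real N * real n)) * of_nat n else 0)"
    proof (cases "a < n \<and> b < n")
      case True
      have "T k = complex_of_real (1/(real d * real N * real n)) * (w^(k*(s+a)) * cnj (w^(k*(r+b))))"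
        if "k < n" for k
      proof -
        have "T k = complex_of_real (1/(real d * real N * real n)) * (cnj (w^(k*r)) * cnj (cnj (w^(k*s))) * (w^(k*a) * cnj (w^(k*b))))"
          using that True rs ab unfolding T_def cc_def fv_def gv_def n_def by simp
        also have "\<dots> = complex_of_real (1/(real d * real N * real n)) * (w^(k*(s+a)) * cnj (w^(k*(r+b))))"
          by (simp add: distrib_left power_add mult_ac)
        finally show ?thesis .
      qed
      then have "(\<Sum>k<n. T k) = complex_of_real (1/(real d * real N * real n)) * (\<Sum>k<n. w^(k*(s+a)) * cnj (w^(k*(r+b))))"
        unfolding sum_distrib_left by (intro sum.cong refl) auto
      also have "(\<Sum>k<n. w^(k*(s+a)) * cnj (w^(k*(r+b)))) = (if (s+a) mod n = (r+b) mod n then of_nat n else 0)"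
        unfolding w_def by (rule fourier) (simp add: n_def)
      finally show ?thesis using True by (simp add: add.commute)
    next
      case False
      have "T k = 0" if "k < n" for k
        using that False ab unfolding T_def gv_def n_def by auto
      then have "(\<Sum>k<n. T k) = 0" by simp
      then show ?thesis using False by auto
    qed
    have P1: "1 / (of_nat d * of_nat N) * (\<Sum>i<n. phi i) = (\<Sum>k<n. T k)"
    proof -
      have npos: "real n > 0" by (simp add: n_def)
      have "complex_of_real (1/(real d*real N*real n)) * of_nat n = complex_of_real (1/(real d*real N*real n) * real n)"
        by simp
      also have "1/(real d*real N*real n) * real n = 1/(real d*real N)" using npos by simp
      also have "complex_of_real (1/(real d*real N)) = 1 / (of_nat d * of_nat N)" by simp
      finally have ar: "complex_of_real (1/(real d*real N*real n)) * of_nat n = 1 / (of_nat d * of_nat N)" .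
      show ?thesis unfolding c1 c2 ar by simp
    qed
    have P2: "1 / (of_nat d * of_nat N) * (\<Sum>i\<in>{n..<N}. phi i) = (\<Sum>k\<in>{n..<N}. T k)"
      unfolding sum_distrib_left
    proof (intro sum.cong refl)
      fix k assume k: "k \<in> {n..<N}"
      then show "1 / (of_nat d * of_nat N) * phi k = T k"
        using ab rs by (auto simp: phi_def T_def cc_def fv_def gv_def n_def ones_vec_def unit_vec_def)
    qed
    show "choi d N (Phi d m) $$ (p,q) = msum (d*N) (d*N) (\<lambda>k. kron (A k) (B k)) {..<N} $$ (p,q)"
      unfolding L L2 R T_def[symmetric] split[of phi] split[of T] distrib_left P1 P2 ..
  qed
  show ?thesis
    unfolding entanglement_breaking_def separable_op_def N_def[symmetric]
    apply (rule exI[of _ N], rule exI[of _ A], rule exI[of _ B])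
    using psdA psdB eq by simp
qed

end
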